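(* Consider the two-player Tower of Hanoi game under normal play on three pegs with $n\ge1$ disks, with any of the ending conditions (EC1)–(EC5) (for $n=1$ only (EC1), (EC4), (EC5)). Then the first player (Anh) has a strategy that makes the game terminate with her making the last move; i.e. the first player wins. Moreover, the same holds from any non-final position with the player to move in the role of the first player, provided the previous player's move did not move the smallest disk.
   Context: Tower of Hanoi on $l$ pegs (here $l=3$, pegs labeled $1,\dots,l$) with $n$ disks of pairwise distinct sizes: a position assigns each disk to a peg, disks on each peg stacked with sizes decreasing from bottom to top. A legal move transfers the top disk of one peg to a different peg that is empty or has a larger top disk. A tower position is one with all disks on one peg. Two-player game: Anh (first player) and Bao (second player) alternate moves starting from the position with all disks on Peg 1; a player may not move the disk that the opponent moved in the immediately preceding move. The game ends when the tower has been transferred to a final peg, according to one fixed ending condition: (EC1) all disks on a given peg distinct from Peg 1; (EC2) all disks on Peg 1, the largest disk having been moved at least once; (EC3) all disks on Peg 1, the smallest disk having been moved at least once; (EC4) all disks on any peg, the largest disk having been moved at least once; (EC5) all disks on any peg, the smallest disk having been moved at least once. A move creating a tower position that does not end the game (tower on a non-final peg) is not allowed; (EC2) and (EC3) are not applicable for $n=1$. Normal play: the player who makes the last (game-ending) move wins; if neither player can force a win, the game is a draw. *)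

theory Defs
  imports Main
begin

text \<open>Two-player Tower of Hanoi on three pegs 1, 2, 3. Disks are 0, ..., n-1,
  where disk i has size i (disk 0 is the smallest, disk n-1 the largest).
  A position is a list p of length n, p ! i being the peg of disk i; the stacking
  on each peg is determined by the sizes.\<close>

record hstate =
  pos :: "nat list"
  lastd :: "nat option"
  big_moved :: bool
  small_moved :: bool

definition pegs :: "nat set" where "pegs = {1, 2, 3}"

datatype ending = EC1 nat | EC2 | EC3 | EC4 | EC5

fun ec_valid :: "nat \<Rightarrow> ending \<Rightarrow> bool" where
  "ec_valid n (EC1 f) = (f \<in> pegs \<and> f \<noteq> 1)"
| "ec_valid n EC2 = (n \<ge> 2)"
| "ec_valid n EC3 = (n \<ge> 2)"
| "ec_valid n EC4 = True"
| "ec_valid n EC5 = True"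

definition is_tower :: "nat list \<Rightarrow> nat \<Rightarrow> bool" where
  "is_tower p q \<longleftrightarrow> (\<forall>i < length p. p ! i = q)"

definition on_top :: "nat list \<Rightarrow> nat \<Rightarrow> bool" where
  "on_top p d \<longleftrightarrow> d < length p \<and> (\<forall>e < d. p ! e \<noteq> p ! d)"

definition can_place :: "nat list \<Rightarrow> nat \<Rightarrow> nat \<Rightarrow> bool" where
  "can_place p d q \<longleftrightarrow> (\<forall>e < d. p ! e \<noteq> q)"

definition legal :: "hstate \<Rightarrow> nat \<Rightarrow> nat \<Rightarrow> bool" where
  "legal s d q \<longleftrightarrow> on_top (pos s) d \<and> q \<in> pegs \<and> q \<noteq> pos s ! d
     \<and> can_place (pos s) d q \<and> lastd s \<noteq> Some d"

definition apply_move :: "hstate \<Rightarrow> nat \<Rightarrow> nat \<Rightarrow> hstate" where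
  "apply_move s d q = \<lparr> pos = (pos s)[d := q], lastd = Some d,
     big_moved = (big_moved s \<or> d = length (pos s) - 1),
     small_moved = (small_moved s \<or> d = 0) \<rparr>"

fun ends :: "ending \<Rightarrow> hstate \<Rightarrow> bool" where
  "ends (EC1 f) s = is_tower (pos s) f"
| "ends EC2 s = (is_tower (pos s) 1 \<and> big_moved s)"
| "ends EC3 s = (is_tower (pos s) 1 \<and> small_moved s)"
| "ends EC4 s = ((\<exists>q \<in> pegs. is_tower (pos s) q) \<and> big_moved s)"
| "ends EC5 s = ((\<exists>q \<in> pegs. is_tower (pos s) q) \<and> small_moved s)"

text \<open>Allowed game step: a legal move, where creating a tower position that does
  not end the game is forbidden.\<close>
definition step :: "ending \<Rightarrow> hstate \<Rightarrow> hstate \<Rightarrow> bool" where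
  "step ec s s' \<longleftrightarrow> (\<exists>d q. legal s d q \<and> s' = apply_move s d q \<and>
     ((\<exists>q' \<in> pegs. is_tower (pos s') q') \<longrightarrow> ends ec s'))"

definition init :: "nat \<Rightarrow> hstate" where
  "init n = \<lparr> pos = replicate n 1, lastd = None, big_moved = False, small_moved = False \<rparr>"

inductive reachable :: "ending \<Rightarrow> nat \<Rightarrow> hstate \<Rightarrow> bool" for ec n where
  "reachable ec n (init n)"
| "reachable ec n s \<Longrightarrow> step ec s s' \<Longrightarrow> \<not> ends ec s' \<Longrightarrow> reachable ec n s'"

text \<open>The player to move in state s can force a win (normal play): either she
  has a game-ending move, or a non-ending move after which every move of the
  opponent is non-ending and leads to a state again winning for her
  (least fixed point, so the win is reached in finitely many moves).\<close>
inductive wins :: "ending \<Rightarrow> hstate \<Rightarrow> bool" for ec where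
  win_end: "step ec s s' \<Longrightarrow> ends ec s' \<Longrightarrow> wins ec s"
| win_step: "step ec s s' \<Longrightarrow> \<not> ends ec s' \<Longrightarrow>
     (\<forall>s''. step ec s' s'' \<longrightarrow> \<not> ends ec s'' \<and> wins ec s'') \<Longrightarrow> wins ec s"

end

theory Submission
  imports Defs
begin


definition oth :: "nat \<Rightarrow> nat \<Rightarrow> nat" where "oth x t = 6 - x - t"

lemma oth_props: "x \<in> pegs \<Longrightarrow> t \<in> pegs \<Longrightarrow> x \<noteq> t \<Longrightarrow> oth x t \<in> pegs \<and> oth x t \<noteq> x \<and> oth x t \<noteq> t"
  by (auto simp: oth_def pegs_def)

lemma oth_uniq: "x \<in> pegs \<Longrightarrow> t \<in> pegs \<Longrightarrow> q \<in> pegs \<Longrightarrow> x \<noteq> t \<Longrightarrow> q \<noteq> x \<Longrightarrow> q \<noteq> t \<Longrightarrow> q = oth x t"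
  by (auto simp: oth_def pegs_def)

lemma oth_oth: "l \<in> pegs \<Longrightarrow> F \<in> pegs \<Longrightarrow> l \<noteq> F \<Longrightarrow> oth (oth l F) l = F"
  by (auto simp: oth_def pegs_def)

fun mv :: "nat \<Rightarrow> nat list \<Rightarrow> nat list" where
  "mv x [] = []"
| "mv x (t#T) = (if t = x then t # mv x T else oth x t # T)"

fun run :: "nat list \<Rightarrow> nat list \<Rightarrow> nat list" where
  "run T [] = T"
| "run T (x#W) = run (mv x T) W"

fun lastp :: "nat \<Rightarrow> nat list \<Rightarrow> nat" where
  "lastp a [] = a"
| "lastp a (x#W) = lastp x W"

fun wok :: "nat \<Rightarrow> nat list \<Rightarrow> nat list \<Rightarrow> bool" where
  "wok a T [] = True"
| "wok a T (x#W) = (x \<in> pegs \<and> x \<noteq> a \<and> (\<exists>t\<in>set T. t \<noteq> x) \<and> wok x (mv x T) W)"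

fun bm :: "nat list \<Rightarrow> nat list \<Rightarrow> bool" where
  "bm T [] = False"
| "bm T (x#W) = (last (mv x T) \<noteq> last T \<or> bm (mv x T) W)"

lemma mv_len[simp]: "length (mv x T) = length T"
  by (induction T) auto

lemma run_len[simp]: "length (run T W) = length T"
  by (induction W arbitrary: T) auto

lemma mv_snoc: "\<exists>t\<in>set R. t \<noteq> x \<Longrightarrow> mv x (R @ [l]) = mv x R @ [l]"
  by (induction R) auto

lemma mv_rep: "l \<noteq> x \<Longrightarrow> mv x (replicate m x @ [l]) = replicate m x @ [oth x l]"
  by (induction m) auto

lemma mv_upd: "(\<forall>e<j. T!e = x) \<Longrightarrow> j < length T \<Longrightarrow> T!j \<noteq> x \<Longrightarrow> mv x T = T[j := oth x (T!j)]"
proof (induction T arbitrary: j)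
  case Nil then show ?case by simp
next
  case (Cons t T)
  show ?case
  proof (cases j)
    case 0 then show ?thesis using Cons.prems by simp
  next
    case (Suc j')
    have "t = x" using Cons.prems(1) Suc by fastforce
    moreover have "mv x T = T[j' := oth x (T!j')]"
      using Cons.prems Suc by (intro Cons.IH) auto
    ultimately show ?thesis using Suc by simp
  qed
qed

lemma lift: "wok a R W \<Longrightarrow> wok a (R@[l]) W \<and> run (R@[l]) W = run R W @ [l]"
proof (induction W arbitrary: a R)
  case Nil then show ?case by simp
next
  case (Cons x W)
  then have h: "\<exists>t\<in>set R. t \<noteq> x" by simp
  have "wok x (mv x R) W" using Cons.prems by simp
  from Cons.IH[OF this] show ?case using Cons.prems h by (auto simp: mv_snoc)
qed

lemma app_wok: "wok a T (W1@W2) = (wok a T W1 \<and> wok (lastp a W1) (run T W1) W2)"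
  by (induction W1 arbitrary: a T) auto

lemma app_run: "run T (W1@W2) = run (run T W1) W2"
  by (induction W1 arbitrary: T) auto

lemma app_lastp: "lastp a (W1@W2) = lastp (lastp a W1) W2"
  by (induction W1 arbitrary: a) auto

lemma app_bm: "bm T (W1@W2) = (bm T W1 \<or> bm (run T W1) W2)"
  by (induction W1 arbitrary: T) auto

lemma bm_last: "T \<noteq> [] \<Longrightarrow> last (run T W) \<noteq> last T \<Longrightarrow> bm T W"
proof (induction W arbitrary: T)
  case Nil then show ?case by simp
next
  case (Cons x W)
  have "mv x T \<noteq> []" using Cons.prems(1) by (metis length_0_conv mv_len)
  then show ?case using Cons by auto
qed

lemma single_walk:
  assumes "a \<in> pegs" "l \<in> pegs" "F \<in> pegs"
  shows "\<exists>W. wok a [l] W \<and> run [l] W = [F] \<and> lastp a W \<noteq> F"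
proof (cases "l = F")
  case True
  show ?thesis
  proof (cases "a = F")
    case False then show ?thesis using True by (intro exI[of _ "[]"]) auto
  next
    case aF: True
    show ?thesis using assms True aF
      by (intro exI[of _ "[if F = 1 then 2 else 1, F, oth F (if F = 1 then 2 else 1)]"])
        (auto simp: pegs_def oth_def)
  qed
next
  case False
  show ?thesis
  proof (cases "a = oth l F")
    case False
    then show ?thesis using assms \<open>l \<noteq> F\<close>
      by (intro exI[of _ "[oth l F]"]) (auto simp: pegs_def oth_def)
  next
    case True
    then show ?thesis using assms \<open>l \<noteq> F\<close>
      by (intro exI[of _ "[F, l]"]) (auto simp: pegs_def oth_def)
  qed
qed

lemma mv_pegs: "set T \<subseteq> pegs \<Longrightarrow> x \<in> pegs \<Longrightarrow> set (mv x T) \<subseteq> pegs"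
proof (induction T)
  case (Cons t T) then show ?case using oth_props[of x t] by auto
qed simp

lemma run_pegs: "wok a T W \<Longrightarrow> set T \<subseteq> pegs \<Longrightarrow> a \<in> pegs \<Longrightarrow> set (run T W) \<subseteq> pegs"
proof (induction W arbitrary: a T)
  case Nil then show ?case by simp
next
  case (Cons x W)
  then show ?case using mv_pegs[of T x] by auto
qed

lemma walk_exists:
  "length R = m \<Longrightarrow> set R \<subseteq> pegs \<Longrightarrow> a \<in> pegs \<Longrightarrow> F \<in> pegs \<Longrightarrow> (R \<noteq> [] \<or> a \<noteq> F) \<Longrightarrow>
   \<exists>W. wok a R W \<and> run R W = replicate (length R) F \<and> lastp a W \<noteq> F"
proof (induction m arbitrary: R a F)
  case 0 then show ?case by (intro exI[of _ "[]"]) auto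
next
  case (Suc m)
  obtain R0 l where R: "R = R0 @ [l]" using Suc.prems(1) by (metis length_Suc_conv_rev)
  have l: "l \<in> pegs" and R0p: "set R0 \<subseteq> pegs" using Suc.prems R by auto
  have lR0: "length R0 = m" using Suc.prems(1) R by simp
  show ?case
  proof (cases "R0 = []")
    case True
    then show ?thesis using R single_walk[OF Suc.prems(3) l Suc.prems(4)] by simp
  next
    case ne: False
    show ?thesis
    proof (cases "l = F")
      case True
      obtain W where W: "wok a R0 W" "run R0 W = replicate (length R0) F" "lastp a W \<noteq> F"
        using Suc.IH[OF lR0 R0p Suc.prems(3,4)] ne by blast
      show ?thesis using lift[OF W(1), of l] W True R
        by (intro exI[of _ W]) (simp add: replicate_append_same)
    next
      case False
      define h where "h = oth l F"
      have h: "h \<in> pegs" "h \<noteq> l" "h \<noteq> F" using oth_props[OF l Suc.prems(4) False] h_def by auto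
      obtain W1 where W1: "wok a R0 W1" "run R0 W1 = replicate m h" "lastp a W1 \<noteq> h"
        using Suc.IH[OF lR0 R0p Suc.prems(3) h(1)] ne lR0 by blast
      have Rp: "set (replicate m h) \<subseteq> pegs" using h by auto
      have ne2: "replicate m h \<noteq> []" using ne lR0 by auto
      obtain W2 where W2: "wok h (replicate m h) W2" "run (replicate m h) W2 = replicate m F"
          "lastp h W2 \<noteq> F"
        using Suc.IH[of "replicate m h" h F] Rp h Suc.prems(4) ne2 by auto
      have L1: "wok a R W1" "run R W1 = replicate m h @ [l]"
        using lift[OF W1(1), of l] W1 R by auto
      have mvh: "mv h (replicate m h @ [l]) = replicate m h @ [F]"
        using mv_rep[of l h m] h oth_oth[OF l Suc.prems(4) False] h_def by simp
      have L2: "wok h (replicate m h @ [F]) W2" "run (replicate m h @ [F]) W2 = replicate m F @ [F]"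
        using lift[OF W2(1), of F] W2 by auto
      have "wok a R (W1 @ [h] @ W2)"
        unfolding app_wok using L1 W1 h mvh L2 by (auto simp: app_run)
      moreover have "run R (W1 @ [h] @ W2) = replicate (length R) F"
        using L1 mvh L2 R lR0 by (simp add: app_run replicate_append_same)
      moreover have "lastp a (W1 @ [h] @ W2) \<noteq> F"
        using W2 by (simp add: app_lastp)
      ultimately show ?thesis by blast
    qed
  qed
qed



lemma pegs_three: "y\<in>pegs \<Longrightarrow> x\<in>pegs \<Longrightarrow> t\<in>pegs \<Longrightarrow> q\<in>pegs \<Longrightarrow> x\<noteq>t \<Longrightarrow> q\<noteq>x \<Longrightarrow> q\<noteq>t \<Longrightarrow> y\<noteq>t \<Longrightarrow> y\<noteq>q \<Longrightarrow> y = x"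
  by (auto simp: pegs_def)

lemma is_tower_set: "is_tower p q \<longleftrightarrow> (\<forall>t\<in>set p. t = q)"
  by (auto simp: is_tower_def all_set_conv_all_nth)

lemma mv_ex: "set T \<subseteq> pegs \<Longrightarrow> x\<in>pegs \<Longrightarrow> \<exists>t\<in>set T. t\<noteq>x \<Longrightarrow> \<exists>t\<in>set (mv x T). t\<noteq>x"
proof (induction T)
  case (Cons t T) then show ?case using oth_props[of x t] by auto
qed simp

lemma bao:
  assumes "legal s1 d q" "pos s1 = x # T" "lastd s1 = Some 0" "set T \<subseteq> pegs" "x \<in> pegs" "T \<noteq> []"
  shows "(x#T)[d:=q] = x # mv x T \<and> (last (mv x T) \<noteq> last T \<longrightarrow> d = length T) \<and> d \<noteq> 0"
proof -
  have L: "on_top (x#T) d" "q \<in> pegs" "q \<noteq> (x#T)!d" "can_place (x#T) d q" "d \<noteq> 0"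
    using assms(1-3) unfolding legal_def by auto
  then obtain j where j: "d = Suc j" by (cases d) auto
  have jl: "j < length T" using L(1) j unfolding on_top_def by simp
  have tj: "T!j \<noteq> x" using L(1) j unfolding on_top_def by force
  have qx: "q \<noteq> x" using L(4) j unfolding can_place_def by force
  have qt: "q \<noteq> T!j" using L(3) j by simp
  have tjp: "T!j \<in> pegs" using jl assms(4) nth_mem by blast
  have e: "\<forall>e<j. T!e = x"
  proof (intro allI impI)
    fix e assume "e < j"
    have "T!e \<noteq> T!j" using L(1) j \<open>e<j\<close> unfolding on_top_def by force
    moreover have "T!e \<noteq> q" using L(4) j \<open>e<j\<close> unfolding can_place_def by force
    moreover have "T!e \<in> pegs" using \<open>e<j\<close> jl assms(4) nth_mem by (meson order.strict_trans subsetD)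
    ultimately show "T!e = x" using pegs_three[OF _ assms(5) tjp L(2)] tj qx qt by blast
  qed
  have q: "q = oth x (T!j)" using oth_uniq[OF assms(5) tjp L(2)] tj qx qt by metis
  have mvT: "mv x T = T[j := q]" using mv_upd[OF e jl tj] q by simp
  have last: "last (mv x T) \<noteq> last T \<longrightarrow> d = length T"
  proof
    assume "last (mv x T) \<noteq> last T"
    then have "j = length T - 1" using mvT assms(6) last_list_update[OF assms(6), of j q]
      by (auto split: if_splits)
    then show "d = length T" using j assms(6) by (cases T) auto
  qed
  show ?thesis using mvT j last L(5) by simp
qed

lemma ends_mono: "ends ec r \<Longrightarrow> pos r' = pos r \<Longrightarrow> (big_moved r \<longrightarrow> big_moved r') \<Longrightarrow>
   (small_moved r \<longrightarrow> small_moved r') \<Longrightarrow> ends ec r'"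
  by (cases ec) auto

lemma G:
  "wok a T W \<Longrightarrow> set T \<subseteq> pegs \<Longrightarrow> a \<in> pegs \<Longrightarrow> T \<noteq> [] \<Longrightarrow> pos s = a # T \<Longrightarrow> lastd s \<noteq> Some 0 \<Longrightarrow>
   run T W = replicate (length T) F \<Longrightarrow> lastp a W \<noteq> F \<Longrightarrow> F \<in> pegs \<Longrightarrow>
   ends ec \<lparr>pos = replicate (Suc (length T)) F, lastd = Some 0, big_moved = (big_moved s \<or> bm T W),
      small_moved = True\<rparr> \<Longrightarrow> wins ec s"
proof (induction W arbitrary: a T s)
  case Nil
  define s' where "s' = apply_move s 0 F"
  have lg: "legal s 0 F" using Nil unfolding legal_def on_top_def can_place_def by auto
  have ps: "pos s' = replicate (Suc (length T)) F" using Nil unfolding s'_def apply_move_def by simp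
  have en: "ends ec s'"
    using ends_mono[OF Nil.prems(10)] ps unfolding s'_def apply_move_def by auto
  have "step ec s s'" unfolding step_def using lg en s'_def by blast
  then show ?case using en by (rule win_end)
next
  case (Cons x W)
  define s1 where "s1 = apply_move s 0 x"
  have w: "x \<in> pegs" "x \<noteq> a" "\<exists>t\<in>set T. t \<noteq> x" "wok x (mv x T) W" using Cons.prems(1) by auto
  have lg: "legal s 0 x" using Cons.prems w unfolding legal_def on_top_def can_place_def by auto
  have ps1: "pos s1 = x # T" using Cons.prems unfolding s1_def apply_move_def by simp
  have ls1: "lastd s1 = Some 0" unfolding s1_def apply_move_def by simp
  have bs1: "big_moved s \<longrightarrow> big_moved s1" unfolding s1_def apply_move_def by simp
  have nt1: "\<not> is_tower (pos s1) q" for q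
    using ps1 w(3) unfolding is_tower_set by auto
  have ne1: "\<not> ends ec s1" using nt1 by (cases ec) auto
  have st1: "step ec s s1" unfolding step_def using lg s1_def nt1 by blast
  have all: "\<forall>s2. step ec s1 s2 \<longrightarrow> \<not> ends ec s2 \<and> wins ec s2"
  proof (intro allI impI)
    fix s2 assume "step ec s1 s2"
    then obtain d q where dq: "legal s1 d q" "s2 = apply_move s1 d q" unfolding step_def by blast
    have B: "(x#T)[d:=q] = x # mv x T" "last (mv x T) \<noteq> last T \<longrightarrow> d = length T" "d \<noteq> 0"
      using bao[OF dq(1) ps1 ls1 Cons.prems(2) w(1) Cons.prems(4)] by auto
    have ps2: "pos s2 = x # mv x T" using dq(2) ps1 B(1) unfolding apply_move_def by simp
    have ld2: "lastd s2 \<noteq> Some 0" using dq(2) B(3) unfolding apply_move_def by simp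
    have bs2: "big_moved s2 = (big_moved s1 \<or> d = length T)" using dq(2) ps1 unfolding apply_move_def by simp
    have mvne: "mv x T \<noteq> []" using Cons.prems(4) by (metis length_0_conv mv_len)
    have mvp: "set (mv x T) \<subseteq> pegs" using mv_pegs Cons.prems(2) w(1) by blast
    have ex2: "\<exists>t\<in>set (mv x T). t \<noteq> x" using mv_ex Cons.prems(2) w(1,3) by blast
    then have "\<not> is_tower (pos s2) q" for q
      using ps2 unfolding is_tower_set by auto
    then have ne2: "\<not> ends ec s2" by (cases ec) auto
    have "wins ec s2"
    proof (rule Cons.IH[OF w(4) mvp w(1) mvne ps2 ld2])
      show "run (mv x T) W = replicate (length (mv x T)) F" using Cons.prems(7) by simp
      show "lastp x W \<noteq> F" using Cons.prems(8) by simp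
      show "F \<in> pegs" by fact
      show "ends ec \<lparr>pos = replicate (Suc (length (mv x T))) F, lastd = Some 0,
          big_moved = (big_moved s2 \<or> bm (mv x T) W), small_moved = True\<rparr>"
        using ends_mono[OF Cons.prems(10)] bs2 bs1 B(2) by auto
    qed
    then show "\<not> ends ec s2 \<and> wins ec s2" using ne2 by simp
  qed
  show ?case using win_step[OF st1 ne1 all] .
qed



lemma reach_inv: "reachable ec n s \<Longrightarrow> length (pos s) = n \<and> set (pos s) \<subseteq> pegs \<and>
   (\<not> big_moved s \<longrightarrow> 0 < n \<longrightarrow> pos s ! (n-1) = 1)"
proof (induction rule: reachable.induct)
  case 1 then show ?case by (auto simp: init_def pegs_def)
next
  case (2 s s')
  then obtain d q where dq: "legal s d q" "s' = apply_move s d q" unfolding step_def by blast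
  have q: "q \<in> pegs" using dq(1) unfolding legal_def by simp
  have ps': "pos s' = (pos s)[d := q]" using dq(2) unfolding apply_move_def by simp
  have "set (pos s') \<subseteq> pegs" unfolding ps' using q "2.IH" set_update_subset_insert[of "pos s" d q]
    by auto
  moreover have "\<not> big_moved s' \<longrightarrow> 0 < n \<longrightarrow> pos s' ! (n-1) = 1"
    using dq(2) "2.IH" unfolding apply_move_def by auto
  ultimately show ?case using dq(2) "2.IH" unfolding apply_move_def by auto
qed

lemma reach_ne: "reachable ec n s \<Longrightarrow> s = init n \<or> \<not> ends ec s"
  by (induction rule: reachable.induct) auto

lemma single_win:
  assumes "pos s = [a]" "lastd s \<noteq> Some 0" "F \<in> pegs" "F \<noteq> a"
    "ends ec \<lparr>pos = [F], lastd = Some 0, big_moved = True, small_moved = True\<rparr>"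
  shows "wins ec s"
proof -
  define s' where "s' = apply_move s 0 F"
  have lg: "legal s 0 F" using assms unfolding legal_def on_top_def can_place_def by auto
  have en: "ends ec s'"
    using ends_mono[OF assms(5)] assms(1) unfolding s'_def apply_move_def by auto
  have "step ec s s'" unfolding step_def using lg en s'_def by blast
  then show ?thesis using en by (rule win_end)
qed

lemma main:
  assumes n: "n \<ge> 1" and v: "ec_valid n ec" and r: "reachable ec n s" and l: "lastd s \<noteq> Some 0"
  shows "wins ec s"
proof -
  have I: "length (pos s) = n" "set (pos s) \<subseteq> pegs" "\<not> big_moved s \<longrightarrow> pos s ! (n-1) = 1"
    using reach_inv[OF r] n by auto
  obtain a T where p: "pos s = a # T" using I(1) n by (cases "pos s") auto
  have a: "a \<in> pegs" and Tp: "set T \<subseteq> pegs" using I(2) p by auto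
  have lT: "length T = n - 1" using I(1) p by auto
  have p1: "1 \<in> pegs" "2 \<in> pegs" by (auto simp: pegs_def)
  have ne: "s = init n \<or> \<not> ends ec s" by (rule reach_ne[OF r])
  show ?thesis
  proof (cases "T = []")
    case True
    then have n1: "n = 1" using lT n by simp
    have ps: "pos s = [a]" using p True by simp
    show ?thesis
    proof (cases ec)
      case (EC1 f)
      have f: "f \<in> pegs" "f \<noteq> 1" using v EC1 by auto
      have "a \<noteq> f"
      proof
        assume "a = f"
        then have "s \<noteq> init n" using f ps n1 by (auto simp: init_def)
        then have "\<not> ends ec s" using ne by simp
        then show False using EC1 ps \<open>a = f\<close> by (simp add: is_tower_set)
      qed
      then show ?thesis using single_win[OF ps l f(1)] EC1 by (simp add: is_tower_set)
    next
      case EC2 then show ?thesis using v n1 by simp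
    next
      case EC3 then show ?thesis using v n1 by simp
    next
      case EC4
      define F where "F = (if a = 1 then 2 else (1::nat))"
      have F: "F \<in> pegs" "F \<noteq> a" unfolding F_def by (auto simp: pegs_def)
      show ?thesis using single_win[OF ps l F] EC4 F(1) by (auto simp: is_tower_set)
    next
      case EC5
      define F where "F = (if a = 1 then 2 else (1::nat))"
      have F: "F \<in> pegs" "F \<noteq> a" unfolding F_def by (auto simp: pegs_def)
      show ?thesis using single_win[OF ps l F] EC5 F(1) by (auto simp: is_tower_set)
    qed
  next
    case Tne: False
    have lastT: "\<not> big_moved s \<longrightarrow> last T = 1"
    proof -
      have "pos s ! (n-1) = last T" using p lT Tne by (cases T rule: rev_exhaust) (auto simp: nth_append)
      then show ?thesis using I(3) by simp
    qed
    have WE: "\<And>F. F \<in> pegs \<Longrightarrow> \<exists>W. wok a T W \<and> run T W = replicate (length T) F \<and> lastp a W \<noteq> F"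
      using walk_exists[OF refl Tp a] Tne by blast
    have GG: "\<And>W F. wok a T W \<Longrightarrow> run T W = replicate (length T) F \<Longrightarrow> lastp a W \<noteq> F \<Longrightarrow> F \<in> pegs \<Longrightarrow>
      ends ec \<lparr>pos = replicate (Suc (length T)) F, lastd = Some 0, big_moved = (big_moved s \<or> bm T W),
        small_moved = True\<rparr> \<Longrightarrow> wins ec s"
      using G[OF _ Tp a Tne p l] by blast
    show ?thesis
    proof (cases ec)
      case (EC1 f)
      have f: "f \<in> pegs" using v EC1 by auto
      obtain W where W: "wok a T W" "run T W = replicate (length T) f" "lastp a W \<noteq> f" using WE[OF f] by blast
      show ?thesis using GG[OF W f] EC1 by (simp add: is_tower_set)
    next
      case EC3
      obtain W where W: "wok a T W" "run T W = replicate (length T) 1" "lastp a W \<noteq> 1" using WE[OF p1(1)] by blast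
      show ?thesis using GG[OF W p1(1)] EC3 by (simp add: is_tower_set)
    next
      case EC5
      obtain W where W: "wok a T W" "run T W = replicate (length T) 1" "lastp a W \<noteq> 1" using WE[OF p1(1)] by blast
      show ?thesis using GG[OF W p1(1)] EC5 p1 by (auto simp: is_tower_set)
    next
      case EC4
      obtain W where W: "wok a T W" "run T W = replicate (length T) 2" "lastp a W \<noteq> 2" using WE[OF p1(2)] by blast
      have "big_moved s \<or> bm T W"
      proof (cases "big_moved s")
        case False
        then have "last (run T W) \<noteq> last T" using lastT W(2) Tne by simp
        then show ?thesis using bm_last[OF Tne] by blast
      qed simp
      then show ?thesis using GG[OF W p1(2)] EC4 p1 by (auto simp: is_tower_set)
    next
      case EC2
      show ?thesis
      proof (cases "big_moved s")
        case True
        obtain W where W: "wok a T W" "run T W = replicate (length T) 1" "lastp a W \<noteq> 1" using WE[OF p1(1)] by blast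
        show ?thesis using GG[OF W p1(1)] EC2 True by (simp add: is_tower_set)
      next
        case False
        obtain W1 where W1: "wok a T W1" "run T W1 = replicate (length T) 2" "lastp a W1 \<noteq> 2"
          using WE[OF p1(2)] by blast
        have a1: "lastp a W1 \<in> pegs"
        proof (cases W1)
          case Nil then show ?thesis using a by simp
        next
          case (Cons x W')
          have "lastp a W1 \<in> set W1 \<or> lastp a W1 = a"
          proof -
            have "\<And>b. lastp b W \<in> set W \<or> lastp b W = b" for W :: "nat list"
              by (induction W) auto
            then show ?thesis by blast
          qed
          moreover have "\<forall>y\<in>set W1. y \<in> pegs" using W1(1)
          proof -
            have "\<And>b R. wok b R W \<Longrightarrow> \<forall>y\<in>set W. y \<in> pegs" for W
              by (induction W) auto
            then show ?thesis using W1(1) by blast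
          qed
          ultimately show ?thesis using a by auto
        qed
        have rp: "set (replicate (length T) (2::nat)) \<subseteq> pegs" using p1 by auto
        obtain W2 where W2: "wok (lastp a W1) (replicate (length T) 2) W2"
          "run (replicate (length T) 2) W2 = replicate (length T) 1" "lastp (lastp a W1) W2 \<noteq> 1"
          using walk_exists[OF refl rp a1 p1(1)] Tne by auto
        have W: "wok a T (W1@W2)" "run T (W1@W2) = replicate (length T) 1" "lastp a (W1@W2) \<noteq> 1"
          using W1 W2 by (auto simp: app_wok app_run app_lastp)
        have "bm T W1" using bm_last[OF Tne] lastT False W1(2) Tne by simp
        then have "bm T (W1@W2)" by (simp add: app_bm)
        then show ?thesis using GG[OF W p1(1)] EC2 by (simp add: is_tower_set)
      qed
    qed
  qed
qed

theorem corollary2: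
  fixes n :: nat and ec :: ending
  assumes "n \<ge> 1" and "ec_valid n ec"
  shows "wins ec (init n) \<and>
    (\<forall>s. reachable ec n s \<and> lastd s \<noteq> Some 0 \<longrightarrow> wins ec s)"
  using main[OF assms] reachable.intros(1)[of ec n] by (auto simp: init_def)

end
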